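(* Let $\mathfrak n$ be a seven-dimensional nilpotent but non-abelian real Lie algebra with an invariant scalar product $\langle\cdot,\cdot\rangle$ of index three. Then $\mathrm{ad}(\mathfrak n)$ is not contained in $\mathfrak g_{2(2)}$, where $\mathfrak g_{2(2)}$ is regarded as a subalgebra of $\mathfrak{so}(\mathfrak n,\langle\cdot,\cdot\rangle)\cong\mathfrak{so}_{4,3}$ (i.e. there is no three-form on $\mathfrak n$ of $\mathrm G_{2(2)}$-type compatible with $\langle\cdot,\cdot\rangle$ that is annihilated by $\mathrm{ad}(x)$ for all $x\in\mathfrak n$).
   Context: An invariant scalar product is a nondegenerate symmetric bilinear form satisfying $\langle[x,y],z\rangle=\langle x,[y,z]\rangle$; index three on a seven-dimensional space means signature $(4,3)$ or $(3,4)$. $\mathfrak{so}(\mathfrak n,\langle\cdot,\cdot\rangle)$ is the Lie algebra of endomorphisms skew-symmetric for $\langle\cdot,\cdot\rangle$. $\mathfrak g_{2(2)}$ is the Lie algebra of the split real form $\mathrm G_{2(2)}$ of $\mathrm G_2^{\mathbb C}$, which is the stabilizer subalgebra in $\mathfrak{so}_{4,3}$ of a certain (generic, split-type) three-form. *)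

theory Defs
  imports "HOL-Analysis.Analysis"
begin

text \<open>The seven-dimensional real vector space underlying the Lie algebra is modelled
  as real ^ 7 (every 7-dimensional real vector space is isomorphic to it).\<close>

definition lie_bracket :: "(real^7 \<Rightarrow> real^7 \<Rightarrow> real^7) \<Rightarrow> bool" where
  "lie_bracket br \<longleftrightarrow>
     (\<forall>x. linear (br x)) \<and> (\<forall>y. linear (\<lambda>x. br x y)) \<and>
     (\<forall>x. br x x = 0) \<and>
     (\<forall>x y z. br x (br y z) + br y (br z x) + br z (br x y) = 0)"

fun lower_central :: "(real^7 \<Rightarrow> real^7 \<Rightarrow> real^7) \<Rightarrow> nat \<Rightarrow> (real^7) set" where
  "lower_central br 0 = UNIV"
| "lower_central br (Suc k) = span {br x y | x y. y \<in> lower_central br k}"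

definition nilpotent_lie :: "(real^7 \<Rightarrow> real^7 \<Rightarrow> real^7) \<Rightarrow> bool" where
  "nilpotent_lie br \<longleftrightarrow> (\<exists>k. lower_central br k = {0})"

definition abelian_lie :: "(real^7 \<Rightarrow> real^7 \<Rightarrow> real^7) \<Rightarrow> bool" where
  "abelian_lie br \<longleftrightarrow> (\<forall>x y. br x y = 0)"

definition invariant_scalar_product ::
  "(real^7 \<Rightarrow> real^7 \<Rightarrow> real^7) \<Rightarrow> (real^7 \<Rightarrow> real^7 \<Rightarrow> real) \<Rightarrow> bool" where
  "invariant_scalar_product br B \<longleftrightarrow>
     (\<forall>x. linear (B x)) \<and> (\<forall>x y. B x y = B y x) \<and>
     (\<forall>x. (\<forall>y. B x y = 0) \<longrightarrow> x = 0) \<and>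
     (\<forall>x y z. B (br x y) z = B x (br y z))"

definition pos_index :: "(real^7 \<Rightarrow> real^7 \<Rightarrow> real) \<Rightarrow> nat" where
  "pos_index B = (GREATEST d. \<exists>U. subspace U \<and> dim U = d \<and> (\<forall>x\<in>U. x \<noteq> 0 \<longrightarrow> B x x > 0))"

definition neg_index :: "(real^7 \<Rightarrow> real^7 \<Rightarrow> real) \<Rightarrow> nat" where
  "neg_index B = (GREATEST d. \<exists>U. subspace U \<and> dim U = d \<and> (\<forall>x\<in>U. x \<noteq> 0 \<longrightarrow> B x x < 0))"

definition index_three :: "(real^7 \<Rightarrow> real^7 \<Rightarrow> real) \<Rightarrow> bool" where
  "index_three B \<longleftrightarrow> (pos_index B, neg_index B) \<in> {(4,3), (3,4)}"

text \<open>Elementary 3-form e^a \<and> e^b \<and> e^c evaluated on basis vectors e_i, e_j, e_k.\<close>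
definition kd :: "nat \<Rightarrow> nat \<Rightarrow> real" where
  "kd x y = (if x = y then 1 else 0)"

definition elem3 :: "nat \<Rightarrow> nat \<Rightarrow> nat \<Rightarrow> nat \<Rightarrow> nat \<Rightarrow> nat \<Rightarrow> real" where
  "elem3 a b c i j k =
     kd a i * (kd b j * kd c k - kd b k * kd c j)
   - kd a j * (kd b i * kd c k - kd b k * kd c i)
   + kd a k * (kd b i * kd c j - kd b j * kd c i)"

text \<open>Standard split G2 three-form
  e^123 - e^145 - e^167 - e^246 + e^257 + e^347 + e^356
  and its associated metric diag(1,1,1,-1,-1,-1,-1).\<close>
definition phi_split :: "nat \<Rightarrow> nat \<Rightarrow> nat \<Rightarrow> real" where
  "phi_split i j k =
     elem3 1 2 3 i j k - elem3 1 4 5 i j k - elem3 1 6 7 i j k - elem3 2 4 6 i j k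
   + elem3 2 5 7 i j k + elem3 3 4 7 i j k + elem3 3 5 6 i j k"

definition g_split :: "nat \<Rightarrow> nat \<Rightarrow> real" where
  "g_split i j = (if i = j then (if i \<le> 3 then 1 else -1) else 0)"

text \<open>Its stabilizer in gl(n) is then a copy of g_2(2) inside so(n,B).\<close>
definition g22_form_compatible ::
  "(real^7 \<Rightarrow> real^7 \<Rightarrow> real) \<Rightarrow> (real^7 \<Rightarrow> real^7 \<Rightarrow> real^7 \<Rightarrow> real) \<Rightarrow> bool" where
  "g22_form_compatible B \<phi> \<longleftrightarrow>
     (\<forall>y z. linear (\<lambda>x. \<phi> x y z)) \<and> (\<forall>x z. linear (\<lambda>y. \<phi> x y z)) \<and>
     (\<forall>x y. linear (\<lambda>z. \<phi> x y z)) \<and>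
     (\<exists>b :: nat \<Rightarrow> real^7. \<exists>c :: real.
        inj_on b {1..7} \<and> independent (b ` {1..7}) \<and> c \<noteq> 0 \<and>
        (\<forall>i\<in>{1..7}. \<forall>j\<in>{1..7}. \<forall>k\<in>{1..7}. \<phi> (b i) (b j) (b k) = phi_split i j k) \<and>
        (\<forall>i\<in>{1..7}. \<forall>j\<in>{1..7}. B (b i) (b j) = c * g_split i j))"

definition ad_annihilates ::
  "(real^7 \<Rightarrow> real^7 \<Rightarrow> real^7) \<Rightarrow> (real^7 \<Rightarrow> real^7 \<Rightarrow> real^7 \<Rightarrow> real) \<Rightarrow> real^7 \<Rightarrow> bool" where
  "ad_annihilates br \<phi> x \<longleftrightarrow>
     (\<forall>u v w. \<phi> (br x u) v w + \<phi> u (br x v) w + \<phi> u v (br x w) = 0)"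

end

theory Submission
  imports Defs
begin

lemma sum7: "(\<Sum>s\<in>{1..7::nat}. f s) = f 1 + f 2 + f 3 + f 4 + f 5 + f 6 + (f 7 :: real)"
  by (simp add: sum.atLeast_Suc_atMost numeral_eq_Suc)

lemma range7: "(i::nat) \<in> {1..7} \<longleftrightarrow> i = 1 \<or> i = 2 \<or> i = 3 \<or> i = 4 \<or> i = 5 \<or> i = 6 \<or> i = 7"
  by auto

lemma key:
  fixes \<psi> :: "nat \<Rightarrow> nat \<Rightarrow> nat \<Rightarrow> real"
  assumes as: "\<And>i j k. \<psi> i j k = - \<psi> j i k" and cy: "\<And>i j k. \<psi> i j k = \<psi> j k i"
    and ann: "\<And>i p q r. i\<in>{1..7} \<Longrightarrow> p\<in>{1..7} \<Longrightarrow> q\<in>{1..7} \<Longrightarrow> r\<in>{1..7} \<Longrightarrow>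
      (\<Sum>s\<in>{1..7}. g_split s s * \<psi> i p s * phi_split s q r)
    + (\<Sum>s\<in>{1..7}. g_split s s * \<psi> i q s * phi_split p s r)
    + (\<Sum>s\<in>{1..7}. g_split s s * \<psi> i r s * phi_split p q s) = 0"
  shows "\<forall>i\<in>{1..7}. \<forall>j\<in>{1..7}. \<forall>k\<in>{1..7}. \<psi> i j k = 0"
proof -
  have S1: "\<And>x y z. y < x \<Longrightarrow> \<psi> x y z = - \<psi> y x z" using as by blast
  have S2: "\<And>x y z. z < y \<Longrightarrow> \<psi> x y z = - \<psi> x z y" by (metis as cy)
  have Z1: "\<And>x z. \<psi> x x z = 0" by (metis as add.inverse_unique add_eq_0_iff2 equation_minus_iff neg_equal_zero)
  have Z2: "\<And>x z. \<psi> z x x = 0" using Z1 cy by metis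
  have e0: "(-1) * \<psi> 1 2 5 + (-1) * \<psi> 1 3 4 = 0"
    using ann[of 1 1 2 4, unfolded sum7] by (simp add: sum7 phi_split_def elem3_def kd_def g_split_def S1 S2 Z1 Z2)
  have e1: "(1) * \<psi> 1 2 4 + (-1) * \<psi> 1 3 5 = 0"
    using ann[of 1 1 2 5, unfolded sum7] by (simp add: sum7 phi_split_def elem3_def kd_def g_split_def S1 S2 Z1 Z2)
  have e2: "(-1) * \<psi> 1 2 7 + (-1) * \<psi> 1 3 6 = 0"
    using ann[of 1 1 2 6, unfolded sum7] by (simp add: sum7 phi_split_def elem3_def kd_def g_split_def S1 S2 Z1 Z2)
  have e3: "(1) * \<psi> 1 2 6 + (-1) * \<psi> 1 3 7 = 0"
    using ann[of 1 1 2 7, unfolded sum7] by (simp add: sum7 phi_split_def elem3_def kd_def g_split_def S1 S2 Z1 Z2)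
  have e4: "(-1) * \<psi> 1 4 7 + (-1) * \<psi> 1 5 6 = 0"
    using ann[of 1 1 4 6, unfolded sum7] by (simp add: sum7 phi_split_def elem3_def kd_def g_split_def S1 S2 Z1 Z2)
  have e5: "(1) * \<psi> 1 4 6 + (-1) * \<psi> 1 5 7 = 0"
    using ann[of 1 1 4 7, unfolded sum7] by (simp add: sum7 phi_split_def elem3_def kd_def g_split_def S1 S2 Z1 Z2)
  have e6: "(1) * \<psi> 1 2 3 + (-1) * \<psi> 1 4 5 + (-1) * \<psi> 1 6 7 = 0"
    using ann[of 1 2 4 7, unfolded sum7] by (simp add: sum7 phi_split_def elem3_def kd_def g_split_def S1 S2 Z1 Z2)
  have e7: "(-1) * \<psi> 1 2 6 + (-1) * \<psi> 2 3 4 = 0"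
    using ann[of 2 1 2 4, unfolded sum7] by (simp add: sum7 phi_split_def elem3_def kd_def g_split_def S1 S2 Z1 Z2)
  have e8: "(1) * \<psi> 1 2 7 + (-1) * \<psi> 2 3 5 = 0"
    using ann[of 2 1 2 5, unfolded sum7] by (simp add: sum7 phi_split_def elem3_def kd_def g_split_def S1 S2 Z1 Z2)
  have e9: "(1) * \<psi> 1 2 4 + (-1) * \<psi> 2 3 6 = 0"
    using ann[of 2 1 2 6, unfolded sum7] by (simp add: sum7 phi_split_def elem3_def kd_def g_split_def S1 S2 Z1 Z2)
  have e10: "(-1) * \<psi> 1 2 5 + (-1) * \<psi> 2 3 7 = 0"
    using ann[of 2 1 2 7, unfolded sum7] by (simp add: sum7 phi_split_def elem3_def kd_def g_split_def S1 S2 Z1 Z2)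
  have e11: "(-1) * \<psi> 2 4 7 + (-1) * \<psi> 2 5 6 = 0"
    using ann[of 2 1 4 6, unfolded sum7] by (simp add: sum7 phi_split_def elem3_def kd_def g_split_def S1 S2 Z1 Z2)
  have e12: "(-1) * \<psi> 1 2 3 + (1) * \<psi> 2 4 6 + (-1) * \<psi> 2 5 7 = 0"
    using ann[of 2 1 4 7, unfolded sum7] by (simp add: sum7 phi_split_def elem3_def kd_def g_split_def S1 S2 Z1 Z2)
  have e13: "(-1) * \<psi> 2 4 5 + (-1) * \<psi> 2 6 7 = 0"
    using ann[of 2 2 4 7, unfolded sum7] by (simp add: sum7 phi_split_def elem3_def kd_def g_split_def S1 S2 Z1 Z2)
  have e14: "(-1) * \<psi> 1 3 6 + (1) * \<psi> 2 3 5 = 0"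
    using ann[of 3 1 2 4, unfolded sum7] by (simp add: sum7 phi_split_def elem3_def kd_def g_split_def S1 S2 Z1 Z2)
  have e15: "(1) * \<psi> 1 3 7 + (-1) * \<psi> 2 3 4 = 0"
    using ann[of 3 1 2 5, unfolded sum7] by (simp add: sum7 phi_split_def elem3_def kd_def g_split_def S1 S2 Z1 Z2)
  have e16: "(1) * \<psi> 1 3 4 + (1) * \<psi> 2 3 7 = 0"
    using ann[of 3 1 2 6, unfolded sum7] by (simp add: sum7 phi_split_def elem3_def kd_def g_split_def S1 S2 Z1 Z2)
  have e17: "(-1) * \<psi> 1 3 5 + (-1) * \<psi> 2 3 6 = 0"
    using ann[of 3 1 2 7, unfolded sum7] by (simp add: sum7 phi_split_def elem3_def kd_def g_split_def S1 S2 Z1 Z2)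
  have e18: "(-1) * \<psi> 1 2 3 + (-1) * \<psi> 3 4 7 + (-1) * \<psi> 3 5 6 = 0"
    using ann[of 3 1 4 6, unfolded sum7] by (simp add: sum7 phi_split_def elem3_def kd_def g_split_def S1 S2 Z1 Z2)
  have e19: "(1) * \<psi> 3 4 6 + (-1) * \<psi> 3 5 7 = 0"
    using ann[of 3 1 4 7, unfolded sum7] by (simp add: sum7 phi_split_def elem3_def kd_def g_split_def S1 S2 Z1 Z2)
  have e20: "(-1) * \<psi> 3 4 5 + (-1) * \<psi> 3 6 7 = 0"
    using ann[of 3 2 4 7, unfolded sum7] by (simp add: sum7 phi_split_def elem3_def kd_def g_split_def S1 S2 Z1 Z2)
  have e21: "(-1) * \<psi> 1 4 6 + (1) * \<psi> 2 4 5 = 0"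
    using ann[of 4 1 2 4, unfolded sum7] by (simp add: sum7 phi_split_def elem3_def kd_def g_split_def S1 S2 Z1 Z2)
  have e22: "(1) * \<psi> 1 4 7 + (1) * \<psi> 3 4 5 = 0"
    using ann[of 4 1 2 5, unfolded sum7] by (simp add: sum7 phi_split_def elem3_def kd_def g_split_def S1 S2 Z1 Z2)
  have e23: "(1) * \<psi> 2 4 7 + (1) * \<psi> 3 4 6 = 0"
    using ann[of 4 1 2 6, unfolded sum7] by (simp add: sum7 phi_split_def elem3_def kd_def g_split_def S1 S2 Z1 Z2)
  have e24: "(-1) * \<psi> 1 4 5 + (-1) * \<psi> 2 4 6 + (1) * \<psi> 3 4 7 = 0"
    using ann[of 4 1 2 7, unfolded sum7] by (simp add: sum7 phi_split_def elem3_def kd_def g_split_def S1 S2 Z1 Z2)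
  have e25: "(-1) * \<psi> 1 2 4 + (-1) * \<psi> 4 5 6 = 0"
    using ann[of 4 1 4 6, unfolded sum7] by (simp add: sum7 phi_split_def elem3_def kd_def g_split_def S1 S2 Z1 Z2)
  have e26: "(1) * \<psi> 1 3 4 + (-1) * \<psi> 4 5 7 = 0"
    using ann[of 4 1 4 7, unfolded sum7] by (simp add: sum7 phi_split_def elem3_def kd_def g_split_def S1 S2 Z1 Z2)
  have e27: "(1) * \<psi> 2 3 4 + (-1) * \<psi> 4 6 7 = 0"
    using ann[of 4 2 4 7, unfolded sum7] by (simp add: sum7 phi_split_def elem3_def kd_def g_split_def S1 S2 Z1 Z2)
  have e28: "(-1) * \<psi> 1 5 6 + (-1) * \<psi> 3 4 5 = 0"
    using ann[of 5 1 2 4, unfolded sum7] by (simp add: sum7 phi_split_def elem3_def kd_def g_split_def S1 S2 Z1 Z2)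
  have e29: "(1) * \<psi> 1 5 7 + (1) * \<psi> 2 4 5 = 0"
    using ann[of 5 1 2 5, unfolded sum7] by (simp add: sum7 phi_split_def elem3_def kd_def g_split_def S1 S2 Z1 Z2)
  have e30: "(-1) * \<psi> 1 4 5 + (1) * \<psi> 2 5 7 + (1) * \<psi> 3 5 6 = 0"
    using ann[of 5 1 2 6, unfolded sum7] by (simp add: sum7 phi_split_def elem3_def kd_def g_split_def S1 S2 Z1 Z2)
  have e31: "(1) * \<psi> 2 3 5 + (-1) * \<psi> 5 6 7 = 0"
    using ann[of 5 2 4 7, unfolded sum7] by (simp add: sum7 phi_split_def elem3_def kd_def g_split_def S1 S2 Z1 Z2)
  have e32: "(-1) * \<psi> 2 5 6 + (-1) * \<psi> 3 4 6 = 0"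
    using ann[of 6 1 2 4, unfolded sum7] by (simp add: sum7 phi_split_def elem3_def kd_def g_split_def S1 S2 Z1 Z2)
  have e33: "(1) * \<psi> 1 6 7 + (1) * \<psi> 2 4 6 + (-1) * \<psi> 3 5 6 = 0"
    using ann[of 6 1 2 5, unfolded sum7] by (simp add: sum7 phi_split_def elem3_def kd_def g_split_def S1 S2 Z1 Z2)
  have e34: "(1) * \<psi> 1 6 7 + (-1) * \<psi> 2 5 7 + (-1) * \<psi> 3 4 7 = 0"
    using ann[of 7 1 2 4, unfolded sum7] by (simp add: sum7 phi_split_def elem3_def kd_def g_split_def S1 S2 Z1 Z2)
  have all0: "\<psi> 1 2 3 = 0 \<and> \<psi> 1 2 4 = 0 \<and> \<psi> 1 2 5 = 0 \<and> \<psi> 1 2 6 = 0 \<and> \<psi> 1 2 7 = 0 \<and> \<psi> 1 3 4 = 0 \<and> \<psi> 1 3 5 = 0 \<and> \<psi> 1 3 6 = 0 \<and> \<psi> 1 3 7 = 0 \<and> \<psi> 1 4 5 = 0 \<and> \<psi> 1 4 6 = 0 \<and> \<psi> 1 4 7 = 0 \<and> \<psi> 1 5 6 = 0 \<and> \<psi> 1 5 7 = 0 \<and> \<psi> 1 6 7 = 0 \<and> \<psi> 2 3 4 = 0 \<and> \<psi> 2 3 5 = 0 \<and> \<psi> 2 3 6 = 0 \<and> \<psi> 2 3 7 = 0 \<and> \<psi> 2 4 5 = 0 \<and> \<psi> 2 4 6 = 0 \<and> \<psi> 2 4 7 = 0 \<and> \<psi> 2 5 6 = 0 \<and> \<psi>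 2 5 7 = 0 \<and> \<psi> 2 6 7 = 0 \<and> \<psi> 3 4 5 = 0 \<and> \<psi> 3 4 6 = 0 \<and> \<psi> 3 4 7 = 0 \<and> \<psi> 3 5 6 = 0 \<and> \<psi> 3 5 7 = 0 \<and> \<psi> 3 6 7 = 0 \<and> \<psi> 4 5 6 = 0 \<and> \<psi> 4 5 7 = 0 \<and> \<psi> 4 6 7 = 0 \<and> \<psi> 5 6 7 = 0"
    using e0 e1 e2 e3 e4 e5 e6 e7 e8 e9 e10 e11 e12 e13 e14 e15 e16 e17 e18 e19 e20 e21 e22 e23 e24 e25 e26 e27 e28 e29 e30 e31 e32 e33 e34 by (intro conjI; linarith)
  have R: "\<psi> i j k = 0" if "i = 1 \<or> i = 2 \<or> i = 3 \<or> i = 4 \<or> i = 5 \<or> i = 6 \<or> i = 7"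
    "j = 1 \<or> j = 2 \<or> j = 3 \<or> j = 4 \<or> j = 5 \<or> j = 6 \<or> j = 7"
    "k = 1 \<or> k = 2 \<or> k = 3 \<or> k = 4 \<or> k = 5 \<or> k = 6 \<or> k = 7" for i j k
    using that all0 by (elim disjE) (simp_all add: S1 S2 Z1 Z2)
  show ?thesis
  proof (intro ballI)
    fix i j k assume "i \<in> {1..7::nat}" "j \<in> {1..7::nat}" "k \<in> {1..7::nat}"
    then show "\<psi> i j k = 0" using R[of i j k] unfolding range7 by blast
  qed
qed

theorem lemma3p9:
  fixes br :: "real^7 \<Rightarrow> real^7 \<Rightarrow> real^7"
    and B :: "real^7 \<Rightarrow> real^7 \<Rightarrow> real"
  assumes "lie_bracket br"
    and "nilpotent_lie br"
    and "\<not> abelian_lie br"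
    and "invariant_scalar_product br B"
    and "index_three B"
  shows "\<not> (\<exists>\<phi>. g22_form_compatible B \<phi> \<and> (\<forall>x. ad_annihilates br \<phi> x))"
proof
  assume "\<exists>\<phi>. g22_form_compatible B \<phi> \<and> (\<forall>x. ad_annihilates br \<phi> x)"
  then obtain \<phi> where comp: "g22_form_compatible B \<phi>" and annh: "\<forall>x. ad_annihilates br \<phi> x"
    by blast
  from comp obtain b c where l1: "\<forall>y z. linear (\<lambda>x. \<phi> x y z)" and l2: "\<forall>x z. linear (\<lambda>y. \<phi> x y z)"
    and l3: "\<forall>x y. linear (\<lambda>z. \<phi> x y z)"
    and binj: "inj_on b {1..7}" and bind: "independent (b ` {1..7})" and c0: "c \<noteq> 0"
    and phib: "\<forall>i\<in>{1..7}. \<forall>j\<in>{1..7}. \<forall>k\<in>{1..7}. \<phi> (b i) (b j) (b k) = phi_split i j k"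
    and Bb: "\<forall>i\<in>{1..7}. \<forall>j\<in>{1..7}. B (b i) (b j) = c * g_split i j"
    unfolding g22_form_compatible_def by blast
  from assms(1) have brl1: "\<forall>x. linear (br x)" and brl2: "\<forall>y. linear (\<lambda>x. br x y)"
    and bralt: "\<forall>x. br x x = 0"
    unfolding lie_bracket_def by blast+
  from assms(4) have Bl: "\<forall>x. linear (B x)" and Bs: "\<forall>x y. B x y = B y x"
    and Bnd: "\<forall>x. (\<forall>y. B x y = 0) \<longrightarrow> x = 0" and Binv: "\<forall>x y z. B (br x y) z = B x (br y z)"
    unfolding invariant_scalar_product_def by blast+
  have Bl2: "linear (\<lambda>x. B x y)" for y
  proof -
    have "(\<lambda>x. B x y) = B y" using Bs by auto
    then show ?thesis using Bl by simp
  qed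
  have card: "card (b ` {1..7}) = 7" using binj by (simp add: card_image)
  have spanU: "x \<in> span (b ` {1..7})" for x
    using card_ge_dim_independent[of "b ` {1..7}" UNIV] bind card by auto
  have zero_span1: "f x = 0" if "linear f" "\<forall>i\<in>{1..7}. f (b i) = 0"
    for f :: "real^7 \<Rightarrow> real" and x
    using linear_eq_0_on_span[OF that(1) _ spanU[of x]] that(2) by blast
  have zero_span2: "f x = 0" if "linear f" "\<forall>i\<in>{1..7}. f (b i) = 0"
    for f :: "real^7 \<Rightarrow> real^7" and x
    using linear_eq_0_on_span[OF that(1) _ spanU[of x]] that(2) by blast
  have expand: "v = (\<Sum>s\<in>{1..7}. (B v (b s) * g_split s s / c) *\<^sub>R b s)" for v
  proof -
    define w where "w = v - (\<Sum>s\<in>{1..7}. (B v (b s) * g_split s s / c) *\<^sub>R b s)"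
    have wt: "B (b t) w = 0" if t: "t \<in> {1..7}" for t
    proof -
      have "B (b t) w = B (b t) v - (\<Sum>s\<in>{1..7}. (B v (b s) * g_split s s / c) * B (b t) (b s))"
        unfolding w_def using Bl by (simp add: linear_diff linear_sum linear_scale)
      also have "(\<Sum>s\<in>{1..7}. (B v (b s) * g_split s s / c) * B (b t) (b s))
          = (\<Sum>s\<in>{1..7}. if s = t then (B v (b t) * g_split t t / c) * (c * g_split t t) else 0)"
        by (rule sum.cong) (use Bb t in \<open>auto simp: g_split_def\<close>)
      also have "\<dots> = (B v (b t) * g_split t t / c) * (c * g_split t t)"
        using t by simp
      also have "\<dots> = B (b t) v" using c0 Bs by (simp add: g_split_def)
      finally show ?thesis by simp
    qed
    have "B y w = 0" for y
      using zero_span1[OF Bl2[of w], of y] wt Bs by metis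
    then have "w = 0" using Bnd Bs by metis
    then show ?thesis unfolding w_def by simp
  qed
  define \<psi> where "\<psi> i j k = B (br (b i) (b j)) (b k) / c" for i j k
  have brexp: "br (b i) (b p) = (\<Sum>s\<in>{1..7}. (g_split s s * \<psi> i p s) *\<^sub>R b s)" for i p
  proof -
    have "(\<Sum>s\<in>{1..7}. (g_split s s * \<psi> i p s) *\<^sub>R b s)
       = (\<Sum>s\<in>{1..7}. (B (br (b i) (b p)) (b s) * g_split s s / c) *\<^sub>R b s)"
      by (simp add: \<psi>_def mult.commute)
    then show ?thesis using expand by metis
  qed
  have anti: "br x y = - br y x" for x y
  proof -
    have "0 = br (x + y) (x + y)" using bralt by simp
    also have "\<dots> = br x (x + y) + br y (x + y)"
      using linear_add[OF brl2[rule_format, of "x + y"]] by simp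
    also have "\<dots> = br x y + br y x"
      using linear_add[OF brl1[rule_format, of x]] linear_add[OF brl1[rule_format, of y]] bralt by simp
    finally show ?thesis by (simp add: eq_neg_iff_add_eq_0)
  qed
  have as: "\<psi> i j k = - \<psi> j i k" for i j k
  proof -
    have "B (br (b i) (b j)) (b k) = B (- br (b j) (b i)) (b k)" using anti[of "b i" "b j"] by simp
    also have "\<dots> = - B (br (b j) (b i)) (b k)" using linear_neg[OF Bl2] by simp
    finally show ?thesis unfolding \<psi>_def by simp
  qed
  have cy: "\<psi> i j k = \<psi> j k i" for i j k
    unfolding \<psi>_def using Binv Bs by metis
  have L1: "\<phi> (\<Sum>s\<in>{1..7}. a s *\<^sub>R b s) y z = (\<Sum>s\<in>{1..7}. a s * \<phi> (b s) y z)" for a y z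
  proof -
    have "\<phi> (\<Sum>s\<in>{1..7}. a s *\<^sub>R b s) y z = (\<Sum>s\<in>{1..7}. \<phi> (a s *\<^sub>R b s) y z)"
      by (rule linear_sum[OF l1[rule_format, of y z]])
    then show ?thesis using linear_scale[OF l1[rule_format, of y z]] by simp
  qed
  have L2: "\<phi> x (\<Sum>s\<in>{1..7}. a s *\<^sub>R b s) z = (\<Sum>s\<in>{1..7}. a s * \<phi> x (b s) z)" for a x z
  proof -
    have "\<phi> x (\<Sum>s\<in>{1..7}. a s *\<^sub>R b s) z = (\<Sum>s\<in>{1..7}. \<phi> x (a s *\<^sub>R b s) z)"
      by (rule linear_sum[OF l2[rule_format, of x z]])
    then show ?thesis using linear_scale[OF l2[rule_format, of x z]] by simp
  qed
  have L3: "\<phi> x y (\<Sum>s\<in>{1..7}. a s *\<^sub>R b s) = (\<Sum>s\<in>{1..7}. a s * \<phi> x y (b s))" for a x y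
  proof -
    have "\<phi> x y (\<Sum>s\<in>{1..7}. a s *\<^sub>R b s) = (\<Sum>s\<in>{1..7}. \<phi> x y (a s *\<^sub>R b s))"
      by (rule linear_sum[OF l3[rule_format, of x y]])
    then show ?thesis using linear_scale[OF l3[rule_format, of x y]] by simp
  qed
  have ann: "(\<Sum>s\<in>{1..7}. g_split s s * \<psi> i p s * phi_split s q r)
    + (\<Sum>s\<in>{1..7}. g_split s s * \<psi> i q s * phi_split p s r)
    + (\<Sum>s\<in>{1..7}. g_split s s * \<psi> i r s * phi_split p q s) = 0"
    if "i\<in>{1..7}" "p\<in>{1..7}" "q\<in>{1..7}" "r\<in>{1..7}" for i p q r
  proof -
    have "\<phi> (br (b i) (b p)) (b q) (b r) + \<phi> (b p) (br (b i) (b q)) (b r) + \<phi> (b p) (b q) (br (b i) (b r)) = 0"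
      using annh unfolding ad_annihilates_def by blast
    moreover have "\<phi> (br (b i) (b p)) (b q) (b r) = (\<Sum>s\<in>{1..7}. g_split s s * \<psi> i p s * phi_split s q r)"
      unfolding brexp L1 by (rule sum.cong) (use phib that in auto)
    moreover have "\<phi> (b p) (br (b i) (b q)) (b r) = (\<Sum>s\<in>{1..7}. g_split s s * \<psi> i q s * phi_split p s r)"
      unfolding brexp L2 by (rule sum.cong) (use phib that in auto)
    moreover have "\<phi> (b p) (b q) (br (b i) (b r)) = (\<Sum>s\<in>{1..7}. g_split s s * \<psi> i r s * phi_split p q s)"
      unfolding brexp L3 by (rule sum.cong) (use phib that in auto)
    ultimately show ?thesis by simp
  qed
  have z: "\<forall>i\<in>{1..7}. \<forall>j\<in>{1..7}. \<forall>k\<in>{1..7}. \<psi> i j k = 0"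
    by (rule key[OF as cy ann])
  have brb: "br (b i) (b p) = 0" if "i\<in>{1..7}" "p\<in>{1..7}" for i p
  proof -
    have "br (b i) (b p) = (\<Sum>s\<in>{1..7}. (g_split s s * \<psi> i p s) *\<^sub>R b s)" by (rule brexp)
    also have "\<dots> = 0" using z that by (intro sum.neutral) auto
    finally show ?thesis .
  qed
  have brx: "br x (b p) = 0" if "p\<in>{1..7}" for x p
    using zero_span2[OF brl2[rule_format, of "b p"], of x] brb that by blast
  have "br x y = 0" for x y
    using zero_span2[OF brl1[rule_format, of x], of y] brx by blast
  then show False using assms(3) unfolding abelian_lie_def by blast
qed

end
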